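(* Let $0<\alpha\le 5\pi/6$ and let $u,v\in V$ with $\{u,v\}\in E$. Then either $\{u,v\}\in E_\alpha$, or there is a path $u_0,u_1,\dots,u_m$ with $u_0=u$, $u_m=v$, $\{u_i,u_{i+1}\}\in E_\alpha$ and $d(u_i,u_{i+1})<d(u,v)$ for all $i=0,\dots,m-1$.
   Context: Let $V$ be a finite set of pairwise distinct points (nodes) in the Euclidean plane, $d$ the Euclidean distance, and $R>0$. Let $G_R=(V,E)$ be the undirected graph with $E=\{\{u,v\}: u\neq v,\ d(u,v)\le R\}$. Fix a finite increasing sequence of radius levels $0<r_1<r_2<\dots<r_k=R$. For $u\in V$ and $1\le i\le k$ let $S_i(u)=\{v\in V\setminus\{u\}: d(u,v)\le r_i\}$. For $0<\alpha<2\pi$, a closed cone of width $\alpha$ with apex $u$ is a set $\{u+t(\cos\varphi,\sin\varphi): t\ge 0,\ \varphi\in[\theta-\alpha/2,\theta+\alpha/2]\}$ for some $\theta$. A finite set $S\subseteq V\setminus\{u\}$ has an $\alpha$-gap (at $u$) if some closed cone of width $\alpha$ with apex $u$ contains no node of $S$ (in particular $\emptyset$ has an $\alpha$-gap). The algorithm CBTC($\alpha$) assigns to each $u$ the index $i_u$ = the least $i\in\{1,\dots,k\}$ such that $S_i(u)$ has no $\alpha$-gap, or $i_u=k$ if there is no such $i$; set $N_\alpha(u)=S_{i_u}(u)$ and $N_\alpha=\{(u,v): v\in N_\alpha(u)\}$. Let $E_\alpha=\{\{u,v\}: (u,v)\in N_\alpha \text{ or } (v,u)\in N_\alpha\}$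 (the symmetric closure of $N_\alpha$) and $G_\alpha=(V,E_\alpha)$. *)

theory Defs
  imports "HOL-Analysis.Analysis"
begin

text \<open>Points of the Euclidean plane are modelled as complex numbers; dist is the Euclidean distance.
Radius levels are r 1 < ... < r k = R (indices 1..k).\<close>

definition S_lvl :: "complex set \<Rightarrow> (nat \<Rightarrow> real) \<Rightarrow> nat \<Rightarrow> complex \<Rightarrow> complex set" where
  "S_lvl V r i u = {v \<in> V - {u}. dist u v \<le> r i}"

definition closed_cone :: "complex \<Rightarrow> real \<Rightarrow> real \<Rightarrow> complex set" where
  "closed_cone u \<alpha> \<theta> = {u + complex_of_real t * cis \<phi> | t \<phi>.
      t \<ge> 0 \<and> \<theta> - \<alpha>/2 \<le> \<phi> \<and> \<phi> \<le> \<theta> + \<alpha>/2}"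

definition has_gap :: "complex \<Rightarrow> real \<Rightarrow> complex set \<Rightarrow> bool" where
  "has_gap u \<alpha> S \<longleftrightarrow> (\<exists>\<theta>. S \<inter> closed_cone u \<alpha> \<theta> = {})"

definition cbtc_index :: "complex set \<Rightarrow> (nat \<Rightarrow> real) \<Rightarrow> nat \<Rightarrow> real \<Rightarrow> complex \<Rightarrow> nat" where
  "cbtc_index V r k \<alpha> u =
     (if \<exists>i\<in>{1..k}. \<not> has_gap u \<alpha> (S_lvl V r i u)
      then (LEAST i. i \<in> {1..k} \<and> \<not> has_gap u \<alpha> (S_lvl V r i u))
      else k)"

definition N_cbtc :: "complex set \<Rightarrow> (nat \<Rightarrow> real) \<Rightarrow> nat \<Rightarrow> real \<Rightarrow> complex \<Rightarrow> complex set" where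
  "N_cbtc V r k \<alpha> u = S_lvl V r (cbtc_index V r k \<alpha> u) u"

definition E_cbtc :: "complex set \<Rightarrow> (nat \<Rightarrow> real) \<Rightarrow> nat \<Rightarrow> real \<Rightarrow> complex \<Rightarrow> complex \<Rightarrow> bool" where
  "E_cbtc V r k \<alpha> u v \<longleftrightarrow> (u \<in> V \<and> v \<in> N_cbtc V r k \<alpha> u) \<or> (v \<in> V \<and> u \<in> N_cbtc V r k \<alpha> v)"

definition E_R :: "complex set \<Rightarrow> real \<Rightarrow> complex \<Rightarrow> complex \<Rightarrow> bool" where
  "E_R V R u v \<longleftrightarrow> u \<in> V \<and> v \<in> V \<and> u \<noteq> v \<and> dist u v \<le> R"

end

theory Submission
  imports Defs
begin

lemma quad_convex:
  fixes l h x B C :: real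
  assumes "l < h" "l \<le> x" "x \<le> h" "l*l + B*l + C < 0" "h*h + B*h + C < 0"
  shows "x*x + B*x + C < 0"
proof -
  have id: "(h-l)*(x*x + B*x + C) = (h-x)*(l*l + B*l + C) + (x-l)*(h*h+B*h+C) + (h-l)*(x-l)*(x-h)"
    by (simp add: algebra_simps)
  have "(h-l)*(x-l)*(x-h) \<le> 0" using assms by (intro mult_nonneg_nonpos) auto
  moreover have "(h-x)*(l*l + B*l + C) + (x-l)*(h*h+B*h+C) < 0"
  proof (cases "x = l")
    case True then show ?thesis using assms by (simp add: mult_pos_neg)
  next
    case False
    then have "(x-l)*(h*h+B*h+C) < 0" using assms by (simp add: mult_pos_neg)
    moreover have "(h-x)*(l*l + B*l + C) \<le> 0" using assms by (simp add: mult_nonneg_nonpos)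
    ultimately show ?thesis by linarith
  qed
  ultimately have "(h-l)*(x*x + B*x + C) < 0" using id by linarith
  then show ?thesis using assms by (simp add: mult_less_0_iff)
qed

lemma cos_lt_half_gt: fixes x :: real assumes "0 < x" "x < pi" "cos x < 1/2" shows "pi/3 < x"
  using cos_mono_less_eq[of x "pi/3"] assms cos_60 by auto

lemma cos_lt_mhalf: fixes x :: real assumes "pi < x" "x < 4*pi/3" shows "cos x < -1/2"
proof -
  have "cos (pi/3) < cos (x - pi)" using cos_mono_less_eq[of "pi/3" "x - pi"] assms by auto
  then show ?thesis using cos_60 by simp
qed

lemma geo_real:
  fixes a b \<phi> \<psi> :: real
  assumes a: "0 < a" "a < 1" and b: "0 < b" "b < 1" and ph: "0 < \<phi>" "\<phi> < pi"
    and ps: "0 < \<psi>" "\<psi> < pi" and ca: "2 * cos \<phi> \<le> a" and cb: "2 * cos \<psi> \<le> b"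
    and sum: "\<phi> + \<psi> \<le> 5*pi/6"
  shows "a*a + b*b + 2*a*b*cos(\<phi>+\<psi>) - 2*a*cos \<phi> - 2*b*cos \<psi> < 0"
proof -
  have p3: "pi/3 < \<phi>" using cos_lt_half_gt[of \<phi>] ph ca a by auto
  have s3: "pi/3 < \<psi>" using cos_lt_half_gt[of \<psi>] ps cb b by auto
  have p2: "\<phi> < pi/2" and s2: "\<psi> < pi/2" using p3 s3 sum by auto
  have c1: "0 < cos \<phi>" using cos_gt_zero_pi[of \<phi>] p2 ph by auto
  have c2: "0 < cos \<psi>" using cos_gt_zero_pi[of \<psi>] s2 ps by auto
  define S where "S = \<phi> + \<psi>"
  have cS: "cos S < 0" using cos_mono_less_eq[of S "pi/2"] p3 s3 sum unfolding S_def by auto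
  define f where "f = (\<lambda>x y. x*x + y*y + 2*x*y*cos S - 2*x*cos \<phi> - 2*y*cos \<psi>)"
  have v00: "f (2*cos \<phi>) (2*cos \<psi>) < 0"
  proof -
    have "f (2*cos \<phi>) (2*cos \<psi>) = 8 * (cos \<phi> * cos \<psi>) * cos S" unfolding f_def by (simp add: algebra_simps power2_eq_square)
    also have "\<dots> < 0" using c1 c2 cS by (simp add: mult_pos_neg)
    finally show ?thesis .
  qed
  have v10: "f 1 (2*cos \<psi>) < 0"
  proof -
    have e: "cos (\<phi> + 2*\<psi>) + cos \<phi> = 2 * cos S * cos \<psi>"
    proof -
      have q: "((\<phi> + 2*\<psi>) + \<phi>)/2 = S" "((\<phi> + 2*\<psi>) - \<phi>)/2 = \<psi>" unfolding S_def by simp_all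
      show ?thesis using cos_plus_cos[of "\<phi> + 2*\<psi>" \<phi>] unfolding q by simp
    qed
    have "f 1 (2*cos \<psi>) = 1 + 2 * cos (\<phi> + 2*\<psi>)" unfolding f_def using e by (simp add: algebra_simps)
    moreover have "cos (\<phi> + 2*\<psi>) < -1/2" using cos_lt_mhalf[of "\<phi> + 2*\<psi>"] p3 s3 s2 sum by auto
    ultimately show ?thesis by simp
  qed
  have v01: "f (2*cos \<phi>) 1 < 0"
  proof -
    have e: "cos (2*\<phi> + \<psi>) + cos \<psi> = 2 * cos S * cos \<phi>"
    proof -
      have q: "((2*\<phi> + \<psi>) + \<psi>)/2 = S" "((2*\<phi> + \<psi>) - \<psi>)/2 = \<phi>" unfolding S_def by simp_all
      show ?thesis using cos_plus_cos[of "2*\<phi> + \<psi>" \<psi>] unfolding q by simp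
    qed
    have "f (2*cos \<phi>) 1 = 1 + 2 * cos (2*\<phi> + \<psi>)" unfolding f_def using e by (simp add: algebra_simps)
    moreover have "cos (2*\<phi> + \<psi>) < -1/2" using cos_lt_mhalf[of "2*\<phi> + \<psi>"] p3 s3 p2 sum by auto
    ultimately show ?thesis by simp
  qed
  have v11: "f 1 1 < 0"
  proof -
    have e1: "cos \<phi> + cos \<psi> = 2 * cos (S/2) * cos ((\<phi> - \<psi>)/2)" using cos_plus_cos[of \<phi> \<psi>] unfolding S_def by simp
    have e2: "cos S = 2 * cos (S/2) ^ 2 - 1" using cos_double_cos[of "S/2"] by simp
    have h1: "0 < cos (S/2)" using cos_gt_zero_pi[of "S/2"] p2 s2 ph ps unfolding S_def by auto
    have h2: "cos (S/2) < cos (\<bar>\<phi> - \<psi>\<bar>/2)"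
      using cos_mono_less_eq[of "S/2" "\<bar>\<phi> - \<psi>\<bar>/2"] p2 s2 ph ps unfolding S_def by auto
    have h3: "cos (\<bar>\<phi> - \<psi>\<bar>/2) = cos ((\<phi> - \<psi>)/2)"
      by (metis abs_divide abs_numeral cos_abs_real)
    have "f 1 1 = 4 * cos (S/2) * (cos (S/2) - cos ((\<phi> - \<psi>)/2))"
      unfolding f_def using e1 e2 by (simp add: algebra_simps power2_eq_square)
    also have "\<dots> < 0" using h1 h2 h3 by (simp add: mult_pos_neg)
    finally show ?thesis .
  qed
  have l1: "2*cos \<phi> < 1" and l2: "2 * cos \<psi> < 1" using ca cb a b by auto
  have fy: "f x y < 0" if "2*cos \<phi> \<le> x" "x \<le> 1" "y = 2*cos \<psi> \<or> y = 1" for x y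
  proof -
    have "x*x + (2*y*cos S - 2*cos \<phi>)*x + (y*y - 2*y*cos \<psi>) < 0"
      apply (rule quad_convex[of "2*cos \<phi>" 1])
      using that l1 v00 v10 v01 v11 unfolding f_def by (auto simp: algebra_simps)
    then show ?thesis unfolding f_def by (simp add: algebra_simps)
  qed
  have "b*b + (2*a*cos S - 2*cos \<psi>)*b + (a*a - 2*a*cos \<phi>) < 0"
    apply (rule quad_convex[of "2*cos \<psi>" 1])
    using l2 b cb fy[of a "2*cos \<psi>"] fy[of a 1] ca a unfolding f_def by (auto simp: algebra_simps)
  then show ?thesis unfolding S_def by (simp add: algebra_simps)
qed

lemma geo_complex:
  fixes p q :: complex
  assumes "Im p > 0" "Im q < 0" "cmod p < 1" "cmod (p - 1) \<ge> 1" "cmod q < 1" "cmod (q - 1) \<ge> 1"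
    and "Arg p - Arg q \<le> 5*pi/6"
  shows "cmod (p + q - 1) < 1"
proof -
  define a where "a = cmod p"
  define b where "b = cmod q"
  define \<phi> where "\<phi> = Arg p"
  define \<psi> where "\<psi> = - Arg q"
  have p0: "p \<noteq> 0" and q0: "q \<noteq> 0" using assms by auto
  have a0: "0 < a" and b0: "0 < b" using p0 q0 unfolding a_def b_def by auto
  have rp: "Re p = a * cos \<phi>" and ip: "Im p = a * sin \<phi>"
    using cos_Arg[OF p0] sin_Arg[OF p0] a0 unfolding a_def \<phi>_def by auto
  have rq: "Re q = b * cos \<psi>" and iq: "Im q = - (b * sin \<psi>)"
    using cos_Arg[OF q0] sin_Arg[OF q0] b0 unfolding b_def \<psi>_def by auto
  have ph: "0 < \<phi>" "\<phi> < pi" using Arg_lt_pi[of p] assms unfolding \<phi>_def by auto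
  have ps: "0 < \<psi>" "\<psi> < pi"
    using Arg_less_0[of q] Arg_bounded[of q] assms unfolding \<psi>_def by auto
  have sa: "(Re p)^2 + (Im p)^2 = a^2" and sb: "(Re q)^2 + (Im q)^2 = b^2"
    unfolding a_def b_def by (simp_all add: cmod_power2)
  have "1 \<le> (cmod (p - 1))^2" using assms by simp
  then have "1 \<le> (Re p - 1)^2 + (Im p)^2" by (simp add: cmod_power2)
  then have "2 * Re p \<le> a * a" using sa by (simp add: power2_eq_square algebra_simps)
  then have ca: "2 * cos \<phi> \<le> a" using a0 rp by (metis mult.commute mult_le_cancel_right_pos mult.assoc)
  have "1 \<le> (cmod (q - 1))^2" using assms by simp
  then have "1 \<le> (Re q - 1)^2 + (Im q)^2" by (simp add: cmod_power2)
  then have "2 * Re q \<le> b * b" using sb by (simp add: power2_eq_square algebra_simps)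
  then have cb: "2 * cos \<psi> \<le> b" using b0 rq by (metis mult.commute mult_le_cancel_right_pos mult.assoc)
  have sum: "\<phi> + \<psi> \<le> 5*pi/6" using assms unfolding \<phi>_def \<psi>_def by simp
  have f: "a*a + b*b + 2*a*b*cos(\<phi>+\<psi>) - 2*a*cos \<phi> - 2*b*cos \<psi> < 0"
  proof (rule geo_real)
    show "a < 1" "b < 1" using assms unfolding a_def b_def by auto
  qed (use a0 b0 ph ps ca cb sum in auto)
  have "(cmod (p + q - 1))^2 = (Re p + Re q - 1)^2 + (Im p + Im q)^2" by (simp add: cmod_power2)
  also have "\<dots> = 1 + ((Re p)^2 + (Im p)^2) + ((Re q)^2 + (Im q)^2) + 2*(Re p * Re q + Im p * Im q) - 2 * Re p - 2 * Re q"
    by (simp add: power2_eq_square algebra_simps)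
  also have "\<dots> = 1 + a^2 + b^2 + 2*(Re p * Re q + Im p * Im q) - 2 * Re p - 2 * Re q"
    unfolding sa sb by simp
  also have "Re p * Re q + Im p * Im q = a * b * cos (\<phi> + \<psi>)"
    unfolding rp rq ip iq cos_add by (simp add: algebra_simps)
  also have "1 + a^2 + b^2 + 2*(a * b * cos (\<phi> + \<psi>)) - 2 * Re p - 2 * Re q = 1 + (a*a + b*b + 2*a*b*cos(\<phi>+\<psi>) - 2*a*cos \<phi> - 2*b*cos \<psi>)"
    unfolding rp rq by (simp add: power2_eq_square algebra_simps)
  finally have "(cmod (p + q - 1))^2 = 1 + (a*a + b*b + 2*a*b*cos(\<phi>+\<psi>) - 2*a*cos \<phi> - 2*b*cos \<psi>)" .
  then have "(cmod (p + q - 1))^2 < 1^2" using f by simp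
  then show ?thesis by (rule power2_less_imp_less) simp
qed

lemma sides:
  fixes P :: "complex set"
  assumes fin: "finite P"
    and cone: "\<And>\<theta>. \<exists>p\<in>P. \<exists>t\<ge>0. \<exists>\<phi>. \<theta> - 5*pi/12 \<le> \<phi> \<and> \<phi> \<le> \<theta> + 5*pi/12 \<and> p = complex_of_real t * cis \<phi>"
    and bad: "\<And>p. p \<in> P \<Longrightarrow> p \<noteq> 0 \<and> cmod p < 1 \<and> cmod (p - 1) \<ge> 1"
  shows "\<exists>p1\<in>P. \<exists>p2\<in>P. Im p1 > 0 \<and> Im p2 < 0 \<and> Arg p1 - Arg p2 \<le> 5*pi/6"
proof -
  define A where "A = Arg ` {p\<in>P. Im p > 0}"
  define B where "B = Arg ` {p\<in>P. Im p < 0}"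
  have fA: "finite A" and fB: "finite B" using fin unfolding A_def B_def by auto
  have Ab: "0 < x \<and> x < pi" if "x \<in> A" for x using that Arg_lt_pi unfolding A_def by auto
  have Bb: "-pi < x \<and> x < 0" if "x \<in> B" for x
    using that Arg_less_0 Arg_bounded unfolding B_def by (auto simp: not_le[symmetric])
  define m1 where "m1 = (if A = {} then pi else Min A)"
  define m2 where "m2 = (if B = {} then -pi else Max B)"
  have m1b: "0 < m1 \<and> m1 \<le> pi" using Ab Min_in[OF fA] unfolding m1_def by force
  have m2b: "-pi \<le> m2 \<and> m2 < 0" using Bb Max_in[OF fB] unfolding m2_def by force
  have minA: "m1 \<le> x" if "x \<in> A" for x using that fA unfolding m1_def by auto
  have maxB: "x \<le> m2" if "x \<in> B" for x using that fB unfolding m2_def by auto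
  have key: "m1 - m2 \<le> 5*pi/6"
  proof (rule ccontr)
    assume H: "\<not> m1 - m2 \<le> 5*pi/6"
    from cone[of "(m1+m2)/2"] obtain p t \<phi> where p: "p \<in> P" "t \<ge> 0"
      "(m1+m2)/2 - 5*pi/12 \<le> \<phi>" "\<phi> \<le> (m1+m2)/2 + 5*pi/12" "p = complex_of_real t * cis \<phi>"
      by blast
    have h1: "(m1+m2)/2 - 5*pi/12 > m2" "(m1+m2)/2 + 5*pi/12 < m1" using H by (simp_all add: field_simps)
    have \<phi>b1: "m2 < \<phi>" using p(3) h1 by linarith
    have \<phi>b2: "\<phi> < m1" using p(4) h1 by linarith
    note \<phi>b = \<phi>b1 \<phi>b2
    have "t \<noteq> 0" using bad[OF p(1)] p(5) by auto
    with p have t0: "t > 0" by auto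
    have Ap: "Arg p = \<phi>" using Arg_rcis[of \<phi> t] t0 \<phi>b m1b m2b p(5) by (simp add: rcis_def)
    have Ip: "Im p = t * sin \<phi>" using p(5) by simp
    show False
    proof (cases "\<phi> > 0")
      case True
      then have "sin \<phi> > 0" using sin_gt_zero[of \<phi>] \<phi>b m1b by auto
      then have "Im p > 0" using Ip t0 by simp
      then have "\<phi> \<in> A" using p(1) Ap unfolding A_def by force
      then show False using minA \<phi>b by force
    next
      case False
      show False
      proof (cases "\<phi> < 0")
        case True
        then have "sin (-\<phi>) > 0" using sin_gt_zero[of "-\<phi>"] \<phi>b m2b by auto
        then have "Im p < 0" using Ip t0 by (simp add: mult_pos_neg)
        then have "\<phi> \<in> B" using p(1) Ap unfolding B_def by force
        then show False using maxB \<phi>b by force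
      next
        case False
        with \<open>\<not> \<phi> > 0\<close> have "\<phi> = 0" by simp
        then have "p = complex_of_real t" using p(5) by simp
        then have e1: "p - 1 = complex_of_real (t - 1)" by simp
        have "cmod p = t" using t0 \<open>p = complex_of_real t\<close> by simp
        moreover have "cmod (p - 1) = \<bar>t - 1\<bar>" unfolding e1 norm_of_real ..
        ultimately have "cmod p = t" "cmod (p - 1) = \<bar>t - 1\<bar>" by auto
        then show False using bad[OF p(1)] by auto
      qed
    qed
  qed
  have "A \<noteq> {}" using key m2b unfolding m1_def by (auto split: if_splits)
  moreover have "B \<noteq> {}" using key m1b unfolding m2_def by (auto split: if_splits)
  ultimately have "m1 \<in> A" "m2 \<in> B" using Min_in[OF fA] Max_in[OF fB] unfolding m1_def m2_def by auto
  then obtain p1 p2 where "p1 \<in> P" "Im p1 > 0" "Arg p1 = m1" "p2 \<in> P" "Im p2 < 0" "Arg p2 = m2"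
    unfolding A_def B_def by auto
  then show ?thesis using key by blast
qed

lemma cone_norm:
  assumes "\<not> has_gap c \<alpha> N" "w0 \<noteq> 0" "\<alpha> \<le> 5*pi/6"
  shows "\<exists>p\<in>(\<lambda>z. (z-c)/w0) ` N. \<exists>t\<ge>0. \<exists>\<phi>. \<theta> - 5*pi/12 \<le> \<phi> \<and> \<phi> \<le> \<theta> + 5*pi/12 \<and> p = complex_of_real t * cis \<phi>"
proof -
  define \<beta> where "\<beta> = Arg w0"
  from assms(1) have "N \<inter> closed_cone c \<alpha> (\<theta> + \<beta>) \<noteq> {}" by (auto simp: has_gap_def)
  then obtain z t \<phi> where z: "z \<in> N" "z = c + complex_of_real t * cis \<phi>" "t \<ge> 0"
    "\<theta> + \<beta> - \<alpha>/2 \<le> \<phi>" "\<phi> \<le> \<theta> + \<beta> + \<alpha>/2"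
    unfolding closed_cone_def by blast
  define r where "r = cmod w0"
  have r0: "r > 0" using assms(2) unfolding r_def by simp
  have w: "w0 = complex_of_real r * cis \<beta>" using rcis_cmod_Arg[of w0] unfolding r_def \<beta>_def rcis_def by simp
  have "(z - c)/w0 = complex_of_real (t/r) * (cis \<phi> / cis \<beta>)" using z(2) w r0 by (simp add: field_simps)
  also have "\<dots> = complex_of_real (t/r) * cis (\<phi> - \<beta>)" by (simp add: cis_divide)
  finally have e: "(z - c)/w0 = complex_of_real (t/r) * cis (\<phi> - \<beta>)" .
  have mem: "(z - c)/w0 \<in> (\<lambda>z. (z-c)/w0) ` N" using z(1) by blast
  have "t/r \<ge> 0" using z(3) r0 by simp
  moreover have "\<theta> - 5*pi/12 \<le> \<phi> - \<beta> \<and> \<phi> - \<beta> \<le> \<theta> + 5*pi/12" using z assms(3) by auto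
  ultimately show ?thesis using mem e by blast
qed


lemma N_facts:
  assumes "u \<in> V" "v \<in> V" "u \<noteq> v" "dist u v \<le> r k" "v \<notin> N_cbtc V r k \<alpha> u"
  shows "\<not> has_gap u \<alpha> (N_cbtc V r k \<alpha> u) \<and>
    (\<forall>z\<in>N_cbtc V r k \<alpha> u. z \<in> V \<and> z \<noteq> u \<and> dist u z < dist u v)"
proof (cases "\<exists>i\<in>{1..k}. \<not> has_gap u \<alpha> (S_lvl V r i u)")
  case True
  define i0 where "i0 = (LEAST i. i \<in> {1..k} \<and> \<not> has_gap u \<alpha> (S_lvl V r i u))"
  have i0: "i0 \<in> {1..k} \<and> \<not> has_gap u \<alpha> (S_lvl V r i0 u)"
    unfolding i0_def using True by (metis (mono_tags, lifting) LeastI)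
  have N: "N_cbtc V r k \<alpha> u = S_lvl V r i0 u"
    unfolding N_cbtc_def cbtc_index_def i0_def using True by simp
  have "\<not> dist u v \<le> r i0" using assms(2,3,5) unfolding N S_lvl_def by auto
  then show ?thesis using i0 unfolding N S_lvl_def by auto
next
  case False
  have N: "N_cbtc V r k \<alpha> u = S_lvl V r k u"
    unfolding N_cbtc_def cbtc_index_def using False by simp
  have False using assms unfolding N S_lvl_def by auto
  then show ?thesis ..
qed

definition pathP :: "(complex \<Rightarrow> complex \<Rightarrow> bool) \<Rightarrow> real \<Rightarrow> complex \<Rightarrow> complex \<Rightarrow> bool" where
  "pathP Ed D a b \<longleftrightarrow> (\<exists>m p. p 0 = a \<and> p m = b \<and> (\<forall>i<m. Ed (p i) (p (Suc i)) \<and> dist (p i) (p (Suc i)) < D))"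

lemma pathP_edge: "Ed a b \<Longrightarrow> dist a b < D \<Longrightarrow> pathP Ed D a b"
  unfolding pathP_def by (rule exI[of _ 1], rule exI[of _ "\<lambda>i. if i = 0 then a else b"]) auto

lemma pathP_mono: "pathP Ed D a b \<Longrightarrow> D \<le> D' \<Longrightarrow> pathP Ed D' a b"
  unfolding pathP_def by force

lemma pathP_trans:
  assumes "pathP Ed D a b" "pathP Ed D b c" shows "pathP Ed D a c"
proof -
  obtain m1 p1 where 1: "p1 0 = a" "p1 m1 = b" "\<forall>i<m1. Ed (p1 i) (p1 (Suc i)) \<and> dist (p1 i) (p1 (Suc i)) < D"
    using assms(1) unfolding pathP_def by blast
  obtain m2 p2 where 2: "p2 0 = b" "p2 m2 = c" "\<forall>i<m2. Ed (p2 i) (p2 (Suc i)) \<and> dist (p2 i) (p2 (Suc i)) < D"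
    using assms(2) unfolding pathP_def by blast
  define p where "p = (\<lambda>i. if i \<le> m1 then p1 i else p2 (i - m1))"
  have "\<forall>i<m1+m2. Ed (p i) (p (Suc i)) \<and> dist (p i) (p (Suc i)) < D"
  proof (intro allI impI)
    fix i assume i: "i < m1 + m2"
    show "Ed (p i) (p (Suc i)) \<and> dist (p i) (p (Suc i)) < D"
    proof (cases "i < m1")
      case True then show ?thesis using 1 unfolding p_def by auto
    next
      case False
      then obtain j where j: "i = m1 + j" "j < m2" using i by (metis add_less_cancel_left le_Suc_ex not_less)
      have "p i = p2 j" using 1 2 j unfolding p_def by auto
      moreover have "p (Suc i) = p2 (Suc j)" using j unfolding p_def by auto
      ultimately show ?thesis using 2 j by auto
    qed
  qed
  moreover have "p 0 = a" "p (m1+m2) = c" using 1 2 unfolding p_def by auto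
  ultimately show ?thesis unfolding pathP_def by blast
qed

lemma dist_norm_lemma:
  fixes u v x y :: complex
  assumes "u \<noteq> v" "cmod ((x-u)/(v-u) + (y-v)/(u-v) - 1) < 1"
  shows "dist x y < dist u v"
proof -
  have n1: "v - u \<noteq> 0" "u - v \<noteq> 0" using assms(1) by auto
  have e1: "(v-u)*((x-u)/(v-u)) = x-u" using n1 by simp
  have e2: "(v-u)*((y-v)/(u-v)) = v - y"
  proof -
    have "(v-u) = - (u - v)" by simp
    then have "(v-u)*((y-v)/(u-v)) = - ((u-v)*((y-v)/(u-v)))" by (metis mult_minus_left)
    also have "\<dots> = v - y" using n1 by simp
    finally show ?thesis .
  qed
  have "x - y = (v - u) * ((x-u)/(v-u) + (y-v)/(u-v) - 1)"
    unfolding distrib_left right_diff_distrib e1 e2 by simp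
  then have "cmod (x - y) = cmod (v-u) * cmod ((x-u)/(v-u) + (y-v)/(u-v) - 1)" by (simp add: norm_mult)
  also have "\<dots> < cmod (v - u)" using assms by simp
  finally show ?thesis by (simp add: dist_norm norm_minus_commute)
qed

lemma bad_norm:
  fixes u v z :: complex
  assumes "u \<noteq> v" "z \<noteq> u" "dist u z < dist u v" "dist z v \<ge> dist u v"
  shows "(z-u)/(v-u) \<noteq> 0 \<and> cmod ((z-u)/(v-u)) < 1 \<and> cmod ((z-u)/(v-u) - 1) \<ge> 1"
proof -
  have d: "cmod (v - u) > 0" using assms by simp
  have "(z-u)/(v-u) - 1 = (z - v)/(v-u)" using assms(1) by (simp add: field_simps)
  moreover have "cmod (z-u) < cmod (v-u)" "cmod (z - v) \<ge> cmod (v - u)" using assms(3,4)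
    by (simp_all add: dist_norm norm_minus_commute)
  ultimately show ?thesis using assms d by (simp add: norm_divide divide_simps)
qed

lemma E_cbtc_sym: "E_cbtc V r k \<alpha> a b \<Longrightarrow> E_cbtc V r k \<alpha> b a"
  unfolding E_cbtc_def by blast

lemma main_step:
  assumes fin: "finite V" and rk: "r k = R" and al: "\<alpha> \<le> 5 * pi / 6"
    and E: "E_R V R u v" and nE: "\<not> E_cbtc V r k \<alpha> u v"
    and sub: "\<And>a b. E_R V R a b \<Longrightarrow> dist a b < dist u v \<Longrightarrow> pathP (E_cbtc V r k \<alpha>) (dist u v) a b"
  shows "pathP (E_cbtc V r k \<alpha>) (dist u v) u v"
proof -
  let ?Ed = "E_cbtc V r k \<alpha>"
  let ?Nu = "N_cbtc V r k \<alpha> u" and ?Nv = "N_cbtc V r k \<alpha> v"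
  define d where "d = dist u v"
  have uV: "u \<in> V" and vV: "v \<in> V" and uv: "u \<noteq> v" and dR: "d \<le> R"
    using E unfolding E_R_def d_def by auto
  have nu: "v \<notin> ?Nu" and nv: "u \<notin> ?Nv" using nE uV vV unfolding E_cbtc_def by auto
  have Fu: "\<not> has_gap u \<alpha> ?Nu \<and> (\<forall>z\<in>?Nu. z \<in> V \<and> z \<noteq> u \<and> dist u z < d)"
    using N_facts[OF uV vV uv _ nu] dR rk unfolding d_def by auto
  have Fv: "\<not> has_gap v \<alpha> ?Nv \<and> (\<forall>z\<in>?Nv. z \<in> V \<and> z \<noteq> v \<and> dist v z < d)"
    using N_facts[OF vV uV uv[symmetric] _ nv] dR rk unfolding d_def by (auto simp: dist_commute)
  have edu: "?Ed u x" if "x \<in> ?Nu" for x using that uV unfolding E_cbtc_def by auto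
  have edv: "?Ed y v" if "y \<in> ?Nv" for y using that vV unfolding E_cbtc_def by auto
  show ?thesis
  proof (cases "\<exists>x\<in>?Nu. dist x v < d")
    case True
    then obtain x where x: "x \<in> ?Nu" "dist x v < d" by blast
    have xv: "x \<noteq> v" using x nu by auto
    have "E_R V R x v" using x Fu xv vV dR unfolding E_R_def by auto
    then have "pathP ?Ed d x v" using sub x unfolding d_def by auto
    moreover have "pathP ?Ed d u x" using pathP_edge[of ?Ed u x d] edu[OF x(1)] Fu x by auto
    ultimately show ?thesis using pathP_trans unfolding d_def by blast
  next
    case False1: False
    show ?thesis
    proof (cases "\<exists>y\<in>?Nv. dist u y < d")
      case True
      then obtain y where y: "y \<in> ?Nv" "dist u y < d" by blast
      have yu: "u \<noteq> y" using y nv by auto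
      have "E_R V R u y" using y Fv yu uV dR unfolding E_R_def by auto
      then have "pathP ?Ed d u y" using sub y unfolding d_def by auto
      moreover have "pathP ?Ed d y v" using pathP_edge[of ?Ed y v d] edv[OF y(1)] Fv y by (auto simp: dist_commute)
      ultimately show ?thesis using pathP_trans unfolding d_def by blast
    next
      case False2: False
      define Pu where "Pu = (\<lambda>z. (z-u)/(v-u)) ` ?Nu"
      define Pv where "Pv = (\<lambda>z. (z-v)/(u-v)) ` ?Nv"
      have finN: "finite ?Nu" "finite ?Nv" using fin Fu Fv by (auto intro: finite_subset)
      have "\<exists>p1\<in>Pu. \<exists>p2\<in>Pu. Im p1 > 0 \<and> Im p2 < 0 \<and> Arg p1 - Arg p2 \<le> 5*pi/6"
      proof (rule sides)
        show "finite Pu" using finN unfolding Pu_def by simp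
        show "\<exists>p\<in>Pu. \<exists>t\<ge>0. \<exists>\<phi>. \<theta> - 5*pi/12 \<le> \<phi> \<and> \<phi> \<le> \<theta> + 5*pi/12 \<and> p = complex_of_real t * cis \<phi>" for \<theta>
          unfolding Pu_def by (rule cone_norm) (use Fu uv al in auto)
        show "p \<noteq> 0 \<and> cmod p < 1 \<and> cmod (p - 1) \<ge> 1" if pin: "p \<in> Pu" for p
        proof -
          obtain z where z: "z \<in> ?Nu" "p = (z-u)/(v-u)" using pin unfolding Pu_def by blast
          show ?thesis unfolding z(2) by (rule bad_norm) (use z Fu False1 uv in \<open>auto simp: d_def\<close>)
        qed
      qed
      then obtain p1 p2 where p: "p1 \<in> Pu" "p2 \<in> Pu" "Im p1 > 0" "Im p2 < 0" "Arg p1 - Arg p2 \<le> 5*pi/6" by blast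
      have "\<exists>p1\<in>Pv. \<exists>p2\<in>Pv. Im p1 > 0 \<and> Im p2 < 0 \<and> Arg p1 - Arg p2 \<le> 5*pi/6"
      proof (rule sides)
        show "finite Pv" using finN unfolding Pv_def by simp
        show "\<exists>p\<in>Pv. \<exists>t\<ge>0. \<exists>\<phi>. \<theta> - 5*pi/12 \<le> \<phi> \<and> \<phi> \<le> \<theta> + 5*pi/12 \<and> p = complex_of_real t * cis \<phi>" for \<theta>
          unfolding Pv_def by (rule cone_norm) (use Fv uv al in auto)
        show "p \<noteq> 0 \<and> cmod p < 1 \<and> cmod (p - 1) \<ge> 1" if pin: "p \<in> Pv" for p
        proof -
          obtain z where z: "z \<in> ?Nv" "p = (z-v)/(u-v)" using pin unfolding Pv_def by blast
          have h1: "z \<noteq> v" "dist v z < dist v u" using z Fv by (auto simp: d_def dist_commute)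
          have h2: "dist z u \<ge> dist v u" using z False2 by (auto simp: d_def dist_commute)
          show ?thesis unfolding z(2) using bad_norm[of v u z] h1 h2 uv by auto
        qed
      qed
      then obtain q1 q2 where q: "q1 \<in> Pv" "q2 \<in> Pv" "Im q1 > 0" "Im q2 < 0" "Arg q1 - Arg q2 \<le> 5*pi/6" by blast
      have bp: "cmod p < 1 \<and> cmod (p - 1) \<ge> 1" if pin: "p \<in> Pu" for p
      proof -
        obtain z where z: "z \<in> ?Nu" "p = (z-u)/(v-u)" using pin unfolding Pu_def by blast
        show ?thesis unfolding z(2) using bad_norm[of u v z] z Fu False1 uv by (auto simp: d_def)
      qed
      have bq: "cmod p < 1 \<and> cmod (p - 1) \<ge> 1" if pin: "p \<in> Pv" for p
      proof -
        obtain z where z: "z \<in> ?Nv" "p = (z-v)/(u-v)" using pin unfolding Pv_def by blast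
        have h1: "z \<noteq> v" "dist v z < dist v u" using z Fv by (auto simp: d_def dist_commute)
        have h2: "dist z u \<ge> dist v u" using z False2 by (auto simp: d_def dist_commute)
        show ?thesis unfolding z(2) using bad_norm[of v u z] h1 h2 uv by auto
      qed
      have "\<exists>x\<in>?Nu. \<exists>y\<in>?Nv. dist x y < d"
      proof (cases "Arg p1 - Arg q2 \<le> 5*pi/6")
        case True
        have c: "cmod (p1 + q2 - 1) < 1" using geo_complex[of p1 q2] p q bp bq True by auto
        obtain x y where "x \<in> ?Nu" "p1 = (x-u)/(v-u)" "y \<in> ?Nv" "q2 = (y-v)/(u-v)"
          using p(1) q(2) unfolding Pu_def Pv_def by blast
        then show ?thesis using dist_norm_lemma[OF uv, of x y] c unfolding d_def by auto
      next
        case False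
        then have T: "Arg q1 - Arg p2 \<le> 5*pi/6" using p(5) q(5) by linarith
        have c: "cmod (q1 + p2 - 1) < 1" using geo_complex[of q1 p2] p q bp bq T by auto
        obtain x y where "x \<in> ?Nu" "p2 = (x-u)/(v-u)" "y \<in> ?Nv" "q1 = (y-v)/(u-v)"
          using p(2) q(1) unfolding Pu_def Pv_def by blast
        then show ?thesis using dist_norm_lemma[OF uv, of x y] c unfolding d_def by (auto simp: add.commute)
      qed
      then obtain x y where xy: "x \<in> ?Nu" "y \<in> ?Nv" "dist x y < d" by blast
      have pux: "pathP ?Ed d u x" using pathP_edge[of ?Ed u x d] edu[OF xy(1)] Fu xy by auto
      have pyv: "pathP ?Ed d y v" using pathP_edge[of ?Ed y v d] edv[OF xy(2)] Fv xy by (auto simp: dist_commute)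
      show ?thesis
      proof (cases "x = y")
        case True
        then show ?thesis using pux pyv pathP_trans unfolding d_def by blast
      next
        case False
        have "E_R V R x y" using xy Fu Fv False dR unfolding E_R_def by auto
        then have "pathP ?Ed d x y" using sub xy unfolding d_def by auto
        then show ?thesis using pux pyv pathP_trans unfolding d_def by blast
      qed
    qed
  qed
qed

lemma main_ind:
  assumes fin: "finite V" and rk: "r k = R" and al: "\<alpha> \<le> 5 * pi / 6"
  shows "E_R V R u v \<Longrightarrow> E_cbtc V r k \<alpha> u v \<or> pathP (E_cbtc V r k \<alpha>) (dist u v) u v"
proof (induction "card {(a,b). a \<in> V \<and> b \<in> V \<and> dist a b < dist u v}" arbitrary: u v rule: less_induct)
  case less
  show ?case
  proof (cases "E_cbtc V r k \<alpha> u v")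
    case True then show ?thesis ..
  next
    case False
    have sub: "pathP (E_cbtc V r k \<alpha>) (dist u v) a b" if ab: "E_R V R a b" "dist a b < dist u v" for a b
    proof -
      have aV: "a \<in> V" "b \<in> V" using ab unfolding E_R_def by auto
      have "{(x,y). x \<in> V \<and> y \<in> V \<and> dist x y < dist a b} \<subset> {(x,y). x \<in> V \<and> y \<in> V \<and> dist x y < dist u v}"
        using ab aV by auto
      moreover have "finite {(x,y). x \<in> V \<and> y \<in> V \<and> dist x y < dist u v}"
        by (rule finite_subset[of _ "V \<times> V"]) (use fin in auto)
      ultimately have "card {(x,y). x \<in> V \<and> y \<in> V \<and> dist x y < dist a b} < card {(x,y). x \<in> V \<and> y \<in> V \<and> dist x y < dist u v}"
        by (rule psubset_card_mono[rotated])
      then have "E_cbtc V r k \<alpha> a b \<or> pathP (E_cbtc V r k \<alpha>) (dist a b) a b" using less.hyps ab(1) by blast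
      then show ?thesis using pathP_edge[of _ a b] pathP_mono ab(2) by (meson less_imp_le)
    qed
    show ?thesis using main_step[OF fin rk al less.prems False sub] by blast
  qed
qed

theorem corollary1:
  fixes V :: "complex set" and R \<alpha> :: real and r :: "nat \<Rightarrow> real" and k :: nat and u v :: complex
  assumes "finite V" and "R > 0"
    and "k \<ge> 1" and "r 1 > 0" and "\<And>i j. 1 \<le> i \<Longrightarrow> i < j \<Longrightarrow> j \<le> k \<Longrightarrow> r i < r j"
    and "r k = R"
    and "0 < \<alpha>" and "\<alpha> \<le> 5 * pi / 6"
    and "E_R V R u v"
  shows "E_cbtc V r k \<alpha> u v \<or>
    (\<exists>m p. p 0 = u \<and> p m = v \<and>
       (\<forall>i<m. E_cbtc V r k \<alpha> (p i) (p (Suc i)) \<and> dist (p i) (p (Suc i)) < dist u v))"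
  using main_ind[of V r k R \<alpha> u v] assms(1,6,8,9) unfolding pathP_def by blast

end
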